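(* Let $d\in\mathbb N$, $\beta\in(1,\infty)$, $\theta\in[1,\infty]$, and let $K_r$ be as in the context. Then, with implicit constant independent of $r$, $$\|K_r\|_{\mathrm L^\theta(\mathbb R^{1+2d})}\lesssim r^{\mathsf Q(\frac1\theta-1)}\qquad\text{for all }r>0.$$
   Context: All $2\times2$ matrices act on $\mathbb R^{2d}$ as their tensor product with $\mathrm{Id}_d$. Let $g_1(r)=r^\beta\sin\log r$, $g_2(r)=r^\beta\cos\log r$, $\mathcal W(r)=\begin{pmatrix}g_1&g_2\\ \dot g_1&\dot g_2\end{pmatrix}(r)$, $\mathcal D_\delta=\mathrm{diag}(\mathrm{Id}_d,\delta\,\mathrm{Id}_d)$, $\mathcal A_{m_0}(r)=\mathcal D_{m_0}^{-1}\mathcal W(r)$ for $m_0\ne0$. Let $c_0:=(-1)^d$ and $\mathsf Q:=(2\beta-1)d+1$. Fix a nonnegative $\psi\in C_c^\infty(\mathbb R^{1+2d})$ with unit mass and support in $(-2,-1)\times B_1(0)\times B_1(0)$. For $r>0$, $$K_r(u_0,u_1,u_2)=c_0^{-1}r^{-\mathsf Q}\Bigl(\frac{u_0}{r}\Bigr)^d\psi\Bigl(\frac{u_0}{r},\mathcal A_{u_0/r}(r)^{-1}\binom{u_1}{u_2}\Bigr)$$ (set to $0$ when $u_0=0$). *)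

theory Defs
  imports "HOL-Analysis.Analysis" "HOL-Probability.Essential_Supremum"
begin

text \<open>Iterated directional (Frechet) derivatives; a function is C-infinity iff every
iterated derivative exists (is Frechet differentiable) everywhere.\<close>
fun dirderivs :: "'a::real_normed_vector list \<Rightarrow> ('a \<Rightarrow> real) \<Rightarrow> ('a \<Rightarrow> real)" where
  "dirderivs [] f = f"
| "dirderivs (v # vs) f = (\<lambda>x. frechet_derivative (dirderivs vs f) (at x) v)"

definition smooth_fun :: "('a::real_normed_vector \<Rightarrow> real) \<Rightarrow> bool" where
  "smooth_fun f \<longleftrightarrow> (\<forall>vs x. dirderivs vs f differentiable (at x))"

definition g1 :: "real \<Rightarrow> real \<Rightarrow> real" where
  "g1 \<beta> r = r powr \<beta> * sin (ln r)"

definition g2 :: "real \<Rightarrow> real \<Rightarrow> real" where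
  "g2 \<beta> r = r powr \<beta> * cos (ln r)"

definition Wmat :: "real \<Rightarrow> real \<Rightarrow> real^2^2" where
  "Wmat \<beta> r = vector [vector [g1 \<beta> r, g2 \<beta> r], vector [deriv (g1 \<beta>) r, deriv (g2 \<beta>) r]]"

definition Dmat :: "real \<Rightarrow> real^2^2" where
  "Dmat \<delta> = vector [vector [1, 0], vector [0, \<delta>]]"

definition Amat :: "real \<Rightarrow> real \<Rightarrow> real \<Rightarrow> real^2^2" where
  "Amat \<beta> m0 r = matrix_inv (Dmat m0) ** Wmat \<beta> r"

text \<open>Action of a 2x2 matrix on R^{2d} as its tensor product with Id_d.\<close>
definition blockact :: "real^2^2 \<Rightarrow> (real^'d) \<times> (real^'d) \<Rightarrow> (real^'d) \<times> (real^'d)" where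
  "blockact M u = (M$1$1 *\<^sub>R fst u + M$1$2 *\<^sub>R snd u, M$2$1 *\<^sub>R fst u + M$2$2 *\<^sub>R snd u)"

definition Qexp :: "real \<Rightarrow> nat \<Rightarrow> real" where
  "Qexp \<beta> d = (2 * \<beta> - 1) * real d + 1"

definition Kr :: "real \<Rightarrow> (real \<times> (real^'d) \<times> (real^'d) \<Rightarrow> real) \<Rightarrow> real
                   \<Rightarrow> real \<times> (real^'d) \<times> (real^'d) \<Rightarrow> real" where
  "Kr \<beta> \<psi> r u = (let d = CARD('d); u0 = fst u; c0 = (-1::real) ^ d in
     if u0 = 0 then 0
     else inverse c0 * r powr (- Qexp \<beta> d) * (u0 / r) ^ d *
          \<psi> (u0 / r, blockact (matrix_inv (Amat \<beta> (u0 / r) r)) (snd u)))"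

definition Lnorm :: "ereal \<Rightarrow> ('a::euclidean_space \<Rightarrow> real) \<Rightarrow> ereal" where
  "Lnorm p f = (if p = \<infinity> then esssup lborel (\<lambda>x. ereal \<bar>f x\<bar>)
     else (let I = (\<integral>\<^sup>+ x. ennreal (\<bar>f x\<bar> powr real_of_ereal p) \<partial>lborel) in
           if I = top then \<infinity> else ereal (enn2real I powr (1 / real_of_ereal p))))"

definition inv_exp :: "ereal \<Rightarrow> real" where
  "inv_exp p = (if p = \<infinity> then 0 else 1 / real_of_ereal p)"

end

theory Submission
  imports Defs
begin

lemma blockact_mult: "blockact (M ** N) u = blockact M (blockact N u)"
  by (simp add: blockact_def matrix_matrix_mult_def sum_2 algebra_simps scaleR_add_right scaleR_add_left)

lemma blockact_mat1: "blockact (mat 1) u = u"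
  by (simp add: blockact_def mat_def)

lemma Dmat_mult: "Dmat a ** Dmat b = Dmat (a * b)"
  by (simp add: Dmat_def matrix_matrix_mult_def sum_2 vec_eq_iff forall_2)

lemma Dmat_1: "Dmat 1 = mat 1"
  by (simp add: Dmat_def mat_def vec_eq_iff forall_2)

lemma matrix_inv_props:
  fixes A :: "real^'n^'n"
  assumes "invertible A"
  shows "A ** matrix_inv A = mat 1" "matrix_inv A ** A = mat 1"
proof -
  have "\<exists>A'. A ** A' = mat 1 \<and> A' ** A = mat 1" using assms unfolding invertible_def by blast
  from someI_ex[OF this] show "A ** matrix_inv A = mat 1" "matrix_inv A ** A = mat 1"
    unfolding matrix_inv_def by auto
qed

lemma matrix_inv_unique:
  fixes A B :: "real^'n^'n"
  assumes "A ** B = mat 1" "B ** A = mat 1"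
  shows "matrix_inv A = B"
proof -
  have inv: "invertible A" using assms unfolding invertible_def by blast
  have "matrix_inv A = matrix_inv A ** (A ** B)" using assms by (simp add: matrix_mul_rid)
  also have "\<dots> = (matrix_inv A ** A) ** B" by (simp add: matrix_mul_assoc)
  also have "\<dots> = B" using matrix_inv_props[OF inv] by (simp add: matrix_mul_lid)
  finally show ?thesis .
qed

lemma Dmat_inv: "s \<noteq> 0 \<Longrightarrow> matrix_inv (Dmat s) = Dmat (1/s)"
  by (rule matrix_inv_unique) (simp_all add: Dmat_mult Dmat_1)

lemma g1_eq: "g1 b = (\<lambda>r. r powr b * sin (ln r))" by (rule ext) (simp add: g1_def)
lemma g2_eq: "g2 b = (\<lambda>r. r powr b * cos (ln r))" by (rule ext) (simp add: g2_def)

lemma deriv_g1: assumes "r > 0" shows "deriv (g1 b) r = r powr (b - 1) * (b * sin (ln r) + cos (ln r))"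
proof -
  have e: "r powr b / r = r powr (b - 1)" using assms by (simp add: powr_diff)
  have "((\<lambda>r. r powr b * sin (ln r)) has_real_derivative
      r powr (b - 1) * (b * sin (ln r) + cos (ln r))) (at r)"
    using assms by (auto intro!: derivative_eq_intros simp: algebra_simps e[symmetric])
  then show ?thesis unfolding g1_eq by (rule DERIV_imp_deriv)
qed

lemma deriv_g2: assumes "r > 0" shows "deriv (g2 b) r = r powr (b - 1) * (b * cos (ln r) - sin (ln r))"
proof -
  have e: "r powr b / r = r powr (b - 1)" using assms by (simp add: powr_diff)
  have "((\<lambda>r. r powr b * cos (ln r)) has_real_derivative
      r powr (b - 1) * (b * cos (ln r) - sin (ln r))) (at r)"
    using assms by (auto intro!: derivative_eq_intros simp: algebra_simps e[symmetric])
  then show ?thesis unfolding g2_eq by (rule DERIV_imp_deriv)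
qed

lemma det_W: assumes "r > 0" shows "det (Wmat b r) = - (r powr b * r powr (b - 1))"
proof -
  have "det (Wmat b r) = g1 b r * deriv (g2 b) r - g2 b r * deriv (g1 b) r"
    by (simp add: det_2 Wmat_def)
  also have "\<dots> = r powr b * r powr (b - 1) * (sin (ln r) * (b * cos (ln r) - sin (ln r))
        - cos (ln r) * (b * sin (ln r) + cos (ln r)))"
    using assms by (simp add: deriv_g1 deriv_g2 g1_def g2_def algebra_simps)
  also have "\<dots> = - (r powr b * r powr (b - 1))"
  proof -
    have "sin (ln r) * (b * cos (ln r) - sin (ln r)) - cos (ln r) * (b * sin (ln r) + cos (ln r)) = -1"
      using sin_cos_squared_add[of "ln r"] by (simp add: algebra_simps power2_eq_square)
    then show ?thesis by simp
  qed
  finally show ?thesis .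
qed

lemma W_invertible: "r > 0 \<Longrightarrow> invertible (Wmat b r)"
  by (simp add: invertible_det_nz det_W)

lemma Amat_inv:
  assumes "r > 0" "s \<noteq> 0"
  shows "matrix_inv (Amat b s r) = matrix_inv (Wmat b r) ** Dmat s"
proof -
  note W = matrix_inv_props[OF W_invertible[OF assms(1)]]
  show ?thesis unfolding Amat_def Dmat_inv[OF assms(2)]
  proof (rule matrix_inv_unique)
    show "Dmat (1 / s) ** Wmat b r ** (matrix_inv (Wmat b r) ** Dmat s) = mat 1"
      using assms W by (simp add: matrix_mul_assoc[symmetric]) (simp add: matrix_mul_assoc matrix_mul_lid Dmat_mult Dmat_1)
    show "matrix_inv (Wmat b r) ** Dmat s ** (Dmat (1 / s) ** Wmat b r) = mat 1"
      using assms W by (simp add: matrix_mul_assoc[symmetric]) (simp add: matrix_mul_assoc matrix_mul_lid Dmat_mult Dmat_1)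
  qed
qed

lemma blockact_ND: "blockact (N ** Dmat s) v = (N$1$1 *\<^sub>R fst v + (N$1$2 * s) *\<^sub>R snd v, N$2$1 *\<^sub>R fst v + (N$2$2 * s) *\<^sub>R snd v)"
  by (simp add: blockact_def matrix_matrix_mult_def sum_2 Dmat_def)

lemma emeasure_lborel_Times:
  fixes A :: "'a::euclidean_space set" and B :: "'b::euclidean_space set"
  assumes "A \<in> sets borel" "B \<in> sets borel"
  shows "emeasure (lborel :: ('a \<times> 'b) measure) (A \<times> B) = emeasure lborel A * emeasure lborel B"
  using assms by (subst lborel_prod[symmetric]) (simp add: lborel.emeasure_pair_measure_Times)

lemma emeasure_cube:
  fixes a :: real
  assumes "a \<ge> 0"
  shows "emeasure (lborel :: ('a::euclidean_space) measure) (cbox (- (a *\<^sub>R One)) (a *\<^sub>R One))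
     = ennreal ((2 * a) ^ DIM('a))"
  using assms by (simp add: emeasure_lborel_cbox_eq inner_diff_left inner_add_left prod_constant power_mult_distrib)

lemma norm_in_cube:
  fixes x :: "'a::euclidean_space"
  assumes "norm x \<le> a"
  shows "x \<in> cbox (- (a *\<^sub>R One)) (a *\<^sub>R One)"
proof -
  have "- a \<le> x \<bullet> i \<and> x \<bullet> i \<le> a" if "i \<in> Basis" for i using Basis_le_norm[OF that, of x] assms by linarith
  then show ?thesis by (auto simp: mem_box inner_diff_left)
qed

lemma norm_comb_le:
  fixes x y :: "'a::real_normed_vector"
  assumes "norm x < 1" "norm y < 1" "\<bar>a\<bar> \<le> A" "\<bar>b\<bar> \<le> A"
  shows "norm (a *\<^sub>R x + b *\<^sub>R y) \<le> 2 * A"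
proof -
  have "norm (a *\<^sub>R x + b *\<^sub>R y) \<le> \<bar>a\<bar> * norm x + \<bar>b\<bar> * norm y"
    by (metis norm_scaleR norm_triangle_ineq)
  also have "\<bar>a\<bar> * norm x \<le> A"
    using assms by (metis abs_ge_zero mult_le_cancel_left1 mult_left_le norm_ge_zero order_le_less order_trans)
  also have "\<bar>b\<bar> * norm y \<le> A"
    using assms by (metis abs_ge_zero mult_le_cancel_left1 mult_left_le norm_ge_zero order_le_less order_trans)
  finally show ?thesis by simp
qed

lemma Kr_eq:
  fixes \<psi> :: "real \<times> (real^'d) \<times> (real^'d) \<Rightarrow> real"
  assumes "r > 0"
  shows "Kr b \<psi> r = (\<lambda>u. if fst u = 0 then 0 else
     inverse ((-1::real) ^ CARD('d)) * r powr (- Qexp b CARD('d)) * (fst u / r) ^ CARD('d) *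
       \<psi> (fst u / r, blockact (matrix_inv (Wmat b r) ** Dmat (fst u / r)) (snd u)))"
  (is "_ = ?R")
proof
  fix u :: "real \<times> (real^'d) \<times> (real^'d)"
  show "Kr b \<psi> r u = ?R u"
    using assms by (simp add: Kr_def Let_def Amat_inv)
qed

lemma smooth_cont: "smooth_fun f \<Longrightarrow> continuous_on UNIV f"
proof -
  assume "smooth_fun f"
  then have "\<forall>x. f differentiable (at x)" unfolding smooth_fun_def
    by (metis dirderivs.simps(1))
  then show ?thesis by (simp add: differentiable_imp_continuous_within continuous_at_imp_continuous_on)
qed

lemma Kr_measurable:
  fixes \<psi> :: "real \<times> (real^'d) \<times> (real^'d) \<Rightarrow> real"
  assumes "r > 0" "continuous_on UNIV \<psi>"
  shows "Kr b \<psi> r \<in> borel_measurable lborel"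
proof -
  have m: "\<psi> \<in> borel_measurable borel" using assms(2) by (rule borel_measurable_continuous_onI)
  define N where "N = matrix_inv (Wmat b r)"
  define F where "F = (\<lambda>u::real \<times> (real^'d) \<times> (real^'d). inverse ((-1::real) ^ CARD('d)) * r powr (- Qexp b CARD('d)) * (fst u / r) ^ CARD('d) *
       \<psi> (fst u / r, (N$1$1 *\<^sub>R fst (snd u) + (N$1$2 * (fst u / r)) *\<^sub>R snd (snd u), N$2$1 *\<^sub>R fst (snd u) + (N$2$2 * (fst u / r)) *\<^sub>R snd (snd u))))"
  have "continuous_on UNIV (\<lambda>u::real \<times> (real^'d) \<times> (real^'d). \<psi> (fst u / r, (N$1$1 *\<^sub>R fst (snd u) + (N$1$2 * (fst u / r)) *\<^sub>R snd (snd u), N$2$1 *\<^sub>R fst (snd u) + (N$2$2 * (fst u / r)) *\<^sub>R snd (snd u))))"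
    using assms(1) by (intro continuous_on_compose2[OF assms(2)]) (auto intro!: continuous_intros)
  note cp = this
  have "continuous_on UNIV F" unfolding F_def using assms(1) cp by (auto intro!: continuous_intros)
  then have "F \<in> borel_measurable borel" by (rule borel_measurable_continuous_onI)
  then have mF: "F \<in> borel_measurable lborel" by simp
  have eq: "Kr b \<psi> r = (\<lambda>u. if fst u = 0 then 0 else F u)"
    unfolding Kr_eq[OF assms(1)] N_def[symmetric] blockact_ND F_def by (rule refl)
  have s: "{x \<in> space lborel. fst x = (0::real)} \<in> sets (lborel :: (real \<times> (real^'d) \<times> (real^'d)) measure)"
  proof -
    have "closed {x::real \<times> (real^'d) \<times> (real^'d). fst x = 0}"
      by (intro closed_Collect_eq continuous_intros)
    then show ?thesis by simp
  qed
  show ?thesis unfolding eq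
    by (rule measurable_If[OF _ mF s]) simp
qed

lemma abs_g1: "r > 0 \<Longrightarrow> \<bar>g1 b r\<bar> \<le> r powr b"
  by (simp add: g1_def abs_mult mult_left_le)
lemma abs_g2: "r > 0 \<Longrightarrow> \<bar>g2 b r\<bar> \<le> r powr b"
  by (simp add: g2_def abs_mult mult_left_le)
lemma abs_dg1: assumes "r > 0" "b \<ge> 0" shows "\<bar>deriv (g1 b) r\<bar> \<le> (b + 1) * r powr (b - 1)"
proof -
  have "\<bar>b * sin (ln r) + cos (ln r)\<bar> \<le> b + 1"
  proof -
    have "\<bar>b * sin (ln r)\<bar> \<le> b" using assms abs_sin_le_one[of "ln r"] by (simp add: abs_mult mult_left_le)
    moreover have "\<bar>cos (ln r)\<bar> \<le> 1" by (rule abs_cos_le_one)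
    ultimately show ?thesis by linarith
  qed
  then show ?thesis using assms by (simp add: deriv_g1 abs_mult mult.commute mult_left_mono)
qed
lemma abs_dg2: assumes "r > 0" "b \<ge> 0" shows "\<bar>deriv (g2 b) r\<bar> \<le> (b + 1) * r powr (b - 1)"
proof -
  have "\<bar>b * cos (ln r) - sin (ln r)\<bar> \<le> b + 1"
  proof -
    have "\<bar>b * cos (ln r)\<bar> \<le> b" using assms abs_cos_le_one[of "ln r"] by (simp add: abs_mult mult_left_le)
    moreover have "\<bar>sin (ln r)\<bar> \<le> 1" by (rule abs_sin_le_one)
    ultimately show ?thesis by linarith
  qed
  then show ?thesis using assms by (simp add: deriv_g2 abs_mult mult.commute mult_left_mono)
qed

lemma Kr_bound:
  fixes \<psi> :: "real \<times> (real^'d) \<times> (real^'d) \<Rightarrow> real"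
  assumes r: "r > 0" and b: "0 \<le> b" and M: "\<forall>x. \<bar>\<psi> x\<bar> \<le> M"
    and supp: "closure {x. \<psi> x \<noteq> 0} \<subseteq> {-2<..< -1} \<times> ball 0 1 \<times> ball 0 1"
  shows "\<bar>Kr b \<psi> r u\<bar> \<le> r powr (- Qexp b CARD('d)) * 2 ^ CARD('d) * M *
     indicator ({-2*r..-r} \<times> cbox (- ((2 * r powr b) *\<^sub>R One)) ((2 * r powr b) *\<^sub>R One)
        \<times> cbox (- ((2 * ((b + 1) * r powr (b - 1))) *\<^sub>R One)) ((2 * ((b + 1) * r powr (b - 1))) *\<^sub>R One)) u"
proof -
  obtain u0 u1 u2 where u: "u = (u0, u1, u2)" by (cases u) auto
  have "\<bar>\<psi> u\<bar> \<le> M" using M by blast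
  then have M0: "0 \<le> M" using abs_ge_zero[of "\<psi> u"] by linarith
  define s where "s = u0 / r"
  define N where "N = matrix_inv (Wmat b r)"
  define w where "w = blockact (N ** Dmat s) (u1, u2)"
  have RHS0: "0 \<le> r powr (- Qexp b CARD('d)) * 2 ^ CARD('d) * M * indicator ({-2*r..-r} \<times> cbox (- ((2 * r powr b) *\<^sub>R One)) ((2 * r powr b) *\<^sub>R One)
        \<times> cbox (- ((2 * ((b + 1) * r powr (b - 1))) *\<^sub>R One)) ((2 * ((b + 1) * r powr (b - 1))) *\<^sub>R One)) u"
    using M0 by simp
  have K0: "Kr b \<psi> r u = (if u0 = 0 then 0 else inverse ((-1::real) ^ CARD('d)) * r powr (- Qexp b CARD('d)) * s ^ CARD('d) * \<psi> (s, w))"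
    unfolding Kr_eq[OF r] u s_def w_def N_def by simp
  show ?thesis
  proof (cases "u0 = 0 \<or> \<psi> (s, w) = 0")
    case True
    then have "Kr b \<psi> r u = 0"
      unfolding K0 by (cases "u0 = 0") simp_all
    then show ?thesis using RHS0 by simp
  next
    case False
    then have u0: "u0 \<noteq> 0" and psi: "\<psi> (s, w) \<noteq> 0" by simp_all
    have "(s, w) \<in> {x. \<psi> x \<noteq> 0}" using psi by simp
    then have "(s, w) \<in> closure {x. \<psi> x \<noteq> 0}" by (rule subsetD[OF closure_subset])
    then have "(s, w) \<in> {-2<..< -1} \<times> ball 0 1 \<times> ball 0 1" by (rule subsetD[OF supp])
    then have sw: "s \<in> {-2<..< -1}" "norm (fst w) < 1" "norm (snd w) < 1" by (simp_all add: mem_Times_iff)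
    have "blockact (Wmat b r) w = blockact (Wmat b r ** N ** Dmat s) (u1, u2)"
      unfolding w_def by (simp add: blockact_mult matrix_mul_assoc)
    also have "\<dots> = blockact (Dmat s) (u1, u2)"
      using matrix_inv_props(1)[OF W_invertible[OF r]] unfolding N_def by (simp add: matrix_mul_lid)
    also have "\<dots> = (u1, s *\<^sub>R u2)" by (simp add: blockact_def Dmat_def)
    finally have eqs: "u1 = g1 b r *\<^sub>R fst w + g2 b r *\<^sub>R snd w"
        "s *\<^sub>R u2 = deriv (g1 b) r *\<^sub>R fst w + deriv (g2 b) r *\<^sub>R snd w"
      by (simp_all add: blockact_def Wmat_def)
    have n1: "norm u1 \<le> 2 * r powr b"
      unfolding eqs(1) by (rule norm_comb_le[OF sw(2,3) abs_g1[OF r] abs_g2[OF r]])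
    have "norm (s *\<^sub>R u2) \<le> 2 * ((b + 1) * r powr (b - 1))"
      unfolding eqs(2) by (rule norm_comb_le[OF sw(2,3) abs_dg1[OF r b] abs_dg2[OF r b]])
    moreover have "1 * norm u2 \<le> \<bar>s\<bar> * norm u2" using sw(1) by (intro mult_right_mono) auto
    then have "norm u2 \<le> norm (s *\<^sub>R u2)" by simp
    ultimately have n2: "norm u2 \<le> 2 * ((b + 1) * r powr (b - 1))" by linarith
    have u0r: "u0 \<in> {-2*r..-r}" using sw(1) r unfolding s_def by (auto simp: field_simps)
    have ind: "indicator ({-2*r..-r} \<times> cbox (- ((2 * r powr b) *\<^sub>R One)) ((2 * r powr b) *\<^sub>R One)
        \<times> cbox (- ((2 * ((b + 1) * r powr (b - 1))) *\<^sub>R One)) ((2 * ((b + 1) * r powr (b - 1))) *\<^sub>R One)) u = (1::real)"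
      using u0r norm_in_cube[OF n1] norm_in_cube[OF n2] unfolding u by (simp add: indicator_def)
    have K: "Kr b \<psi> r u = inverse ((-1::real) ^ CARD('d)) * r powr (- Qexp b CARD('d)) * s ^ CARD('d) * \<psi> (s, w)"
      unfolding K0 using u0 by simp
    have "\<bar>Kr b \<psi> r u\<bar> = r powr (- Qexp b CARD('d)) * (\<bar>s\<bar> ^ CARD('d) * \<bar>\<psi> (s, w)\<bar>)"
      unfolding K by (simp add: abs_mult power_abs)
    also have "\<dots> \<le> r powr (- Qexp b CARD('d)) * (2 ^ CARD('d) * M)"
      using sw(1) spec[OF M, of "(s, w)"] by (intro mult_left_mono mult_mono power_mono) auto
    finally show ?thesis using ind by simp
  qed
qed

lemma psi_bounded:
  fixes \<psi> :: "'a::euclidean_space \<Rightarrow> real"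
  assumes "continuous_on UNIV \<psi>" "closure {x. \<psi> x \<noteq> 0} \<subseteq> T" "bounded T"
  shows "\<exists>M>0. \<forall>x. \<bar>\<psi> x\<bar> \<le> M"
proof -
  let ?C = "closure {x. \<psi> x \<noteq> 0}"
  have "bounded ?C" by (rule bounded_subset[OF assms(3) assms(2)])
  then have cC: "compact ?C" unfolding compact_eq_bounded_closed by simp
  have "compact (\<psi> ` ?C)"
    by (rule compact_continuous_image[OF continuous_on_subset[OF assms(1) subset_UNIV] cC])
  then have "bounded (\<psi> ` ?C)" by (rule compact_imp_bounded)
  then obtain M0 where M0: "\<forall>y\<in>\<psi> ` ?C. norm y \<le> M0" unfolding bounded_iff by blast
  have "\<bar>\<psi> x\<bar> \<le> max M0 1" for x
  proof (cases "\<psi> x = 0")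
    case False
    then have "x \<in> {x. \<psi> x \<noteq> 0}" by simp
    then have "x \<in> ?C" by (rule subsetD[OF closure_subset])
    then have "norm (\<psi> x) \<le> M0" using M0 by blast
    then show ?thesis by simp
  qed simp
  then show ?thesis by (intro exI[of _ "max M0 1"]) auto
qed

lemma emeasure_S:
  assumes r: "r > 0" and b: "b \<ge> 0"
  shows "emeasure (lborel :: (real \<times> (real^'d) \<times> (real^'d)) measure)
    ({-2*r..-r} \<times> cbox (- ((2 * r powr b) *\<^sub>R One)) ((2 * r powr b) *\<^sub>R One)
        \<times> cbox (- ((2 * ((b + 1) * r powr (b - 1))) *\<^sub>R One)) ((2 * ((b + 1) * r powr (b - 1))) *\<^sub>R One))
    = ennreal ((16 * (b + 1)) ^ CARD('d) * r powr Qexp b CARD('d))"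
proof -
  have e: "emeasure (lborel :: (real \<times> (real^'d) \<times> (real^'d)) measure)
    ({-2*r..-r} \<times> cbox (- ((2 * r powr b) *\<^sub>R One)) ((2 * r powr b) *\<^sub>R One)
        \<times> cbox (- ((2 * ((b + 1) * r powr (b - 1))) *\<^sub>R One)) ((2 * ((b + 1) * r powr (b - 1))) *\<^sub>R One))
    = ennreal r * (ennreal ((2 * (2 * r powr b)) ^ CARD('d)) * ennreal ((2 * (2 * ((b + 1) * r powr (b - 1)))) ^ CARD('d)))"
  proof -
    let ?I = "{-2*r..-r}" and ?C1 = "cbox (- ((2 * r powr b) *\<^sub>R One)) ((2 * r powr b) *\<^sub>R One) :: (real^'d) set"
      and ?C2 = "cbox (- ((2 * ((b + 1) * r powr (b - 1))) *\<^sub>R One)) ((2 * ((b + 1) * r powr (b - 1))) *\<^sub>R One) :: (real^'d) set"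
    have "emeasure (lborel :: (real \<times> (real^'d) \<times> (real^'d)) measure) (?I \<times> ?C1 \<times> ?C2)
       = emeasure lborel ?I * emeasure lborel (?C1 \<times> ?C2)"
      by (rule emeasure_lborel_Times) (auto intro!: borel_closed closed_Times)
    also have "emeasure lborel (?C1 \<times> ?C2) = emeasure lborel ?C1 * emeasure lborel ?C2"
      by (rule emeasure_lborel_Times) auto
    also have "emeasure lborel ?C1 = ennreal ((2 * (2 * r powr b)) ^ CARD('d))"
      using emeasure_cube[of "2 * r powr b", where 'a="real^'d"] r by simp
    also have "emeasure lborel ?C2 = ennreal ((2 * (2 * ((b + 1) * r powr (b - 1)))) ^ CARD('d))"
      using emeasure_cube[of "2 * ((b + 1) * r powr (b - 1))", where 'a="real^'d"] r b by simp
    also have "emeasure lborel ?I = ennreal r" using r by simp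
    finally show ?thesis .
  qed
  have p1: "(2 * (2 * r powr b)) ^ CARD('d) = 4 ^ CARD('d) * r powr (real CARD('d) * b)"
    using r by (simp add: power_mult_distrib powr_power)
  have p2: "(2 * (2 * ((b + 1) * r powr (b - 1)))) ^ CARD('d) = (4 * (b + 1)) ^ CARD('d) * r powr (real CARD('d) * (b - 1))"
  proof -
    have e2: "2 * (2 * ((b + 1) * r powr (b - 1))) = (4 * (b + 1)) * r powr (b - 1)" by simp
    show ?thesis unfolding e2 power_mult_distrib using r by (simp add: powr_power)
  qed
  have p3: "(16 * (b + 1)) ^ CARD('d) = 4 ^ CARD('d) * (4 * (b + 1)) ^ CARD('d)"
    by (simp flip: power_mult_distrib)
  have q: "Qexp b CARD('d) = 1 + real CARD('d) * b + real CARD('d) * (b - 1)"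
    by (simp add: Qexp_def algebra_simps)
  have rq: "r powr Qexp b CARD('d) = r * r powr (real CARD('d) * b) * r powr (real CARD('d) * (b - 1))"
    unfolding q using r by (simp add: powr_add)
  have "r * ((2 * (2 * r powr b)) ^ CARD('d) * (2 * (2 * ((b + 1) * r powr (b - 1)))) ^ CARD('d))
     = (16 * (b + 1)) ^ CARD('d) * r powr Qexp b CARD('d)"
    unfolding p1 p2 p3 rq by (simp only: mult_ac)
  then show ?thesis unfolding e using r b by (simp add: ennreal_mult[symmetric])
qed

theorem corollary2p6:
  fixes \<beta> :: real and \<theta> :: ereal
    and \<psi> :: "real \<times> (real^'d) \<times> (real^'d) \<Rightarrow> real"
  assumes "1 < \<beta>" and "1 \<le> \<theta>"
    and "smooth_fun \<psi>" and "\<forall>x. 0 \<le> \<psi> x" and "(\<psi> has_integral 1) UNIV"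
    and "closure {x. \<psi> x \<noteq> 0} \<subseteq> {-2<..< -1} \<times> ball 0 1 \<times> ball 0 1"
  shows "\<exists>C. \<forall>r>0. Lnorm \<theta> (Kr \<beta> \<psi> r)
                    \<le> ereal (C * r powr (Qexp \<beta> CARD('d) * (inv_exp \<theta> - 1)))"
proof -
  have cont: "continuous_on UNIV \<psi>" using assms(3) by (rule smooth_cont)
  have bT: "bounded ({-2<..< -1::real} \<times> ball (0::real^'d) 1 \<times> ball (0::real^'d) 1)"
    by (intro bounded_Times) auto
  obtain M where M0: "M > 0" and M: "\<forall>x. \<bar>\<psi> x\<bar> \<le> M"
    using psi_bounded[OF cont assms(6) bT] by blast
  have b0: "0 \<le> \<beta>" using assms(1) by simp
  define Q where "Q = Qexp \<beta> CARD('d)"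
  define d where "d = CARD('d)"
  define S where "S = (\<lambda>r::real. ({-2*r..-r} \<times> cbox (- ((2 * r powr \<beta>) *\<^sub>R One)) ((2 * r powr \<beta>) *\<^sub>R One)
        \<times> cbox (- ((2 * ((\<beta> + 1) * r powr (\<beta> - 1))) *\<^sub>R One)) ((2 * ((\<beta> + 1) * r powr (\<beta> - 1))) *\<^sub>R One)
        :: (real \<times> (real^'d) \<times> (real^'d)) set))"
  have bound: "\<bar>Kr \<beta> \<psi> r u\<bar> \<le> r powr (- Q) * 2 ^ d * M * indicator (S r) u" if "r > 0" for r u
    using Kr_bound[OF that b0 M assms(6)] unfolding Q_def d_def S_def by simp
  show ?thesis
  proof (cases "\<theta> = \<infinity>")
    case True
    show ?thesis
    proof (intro exI[of _ "2 ^ d * M"] allI impI)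
      fix r :: real assume r: "r > 0"
      have "Lnorm \<theta> (Kr \<beta> \<psi> r) = esssup lborel (\<lambda>x. ereal \<bar>Kr \<beta> \<psi> r x\<bar>)"
        using True by (simp add: Lnorm_def)
      also have "esssup lborel (\<lambda>x. ereal \<bar>Kr \<beta> \<psi> r x\<bar>) \<le> ereal (r powr (- Q) * 2 ^ d * M)"
      proof (rule esssup_I)
        show "(\<lambda>x. ereal \<bar>Kr \<beta> \<psi> r x\<bar>) \<in> borel_measurable lborel"
          by (intro borel_measurable_ereal borel_measurable_abs Kr_measurable[OF r cont])
        have "\<bar>Kr \<beta> \<psi> r x\<bar> \<le> r powr (- Q) * 2 ^ d * M" for x
        proof -
          have "r powr (- Q) * 2 ^ d * M * indicator (S r) x \<le> r powr (- Q) * 2 ^ d * M"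
            using M0 by (simp add: indicator_def)
          then show ?thesis using bound[OF r, of x] by linarith
        qed
        then show "AE x in lborel. ereal \<bar>Kr \<beta> \<psi> r x\<bar> \<le> ereal (r powr (- Q) * 2 ^ d * M)"
          by simp
      qed
      also have "r powr (- Q) * 2 ^ d * M = 2 ^ d * M * r powr (Qexp \<beta> CARD('d) * (inv_exp \<theta> - 1))"
        using True unfolding inv_exp_def Q_def by simp
      finally show "Lnorm \<theta> (Kr \<beta> \<psi> r) \<le> ereal (2 ^ d * M * r powr (Qexp \<beta> CARD('d) * (inv_exp \<theta> - 1)))" .
    qed
  next
    case False
    then obtain p where p: "\<theta> = ereal p" using assms(2) by (cases \<theta>) auto
    have p1: "1 \<le> p" using assms(2) p by simp
    define V where "V = (16 * (\<beta> + 1)) ^ d"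
    have V0: "V > 0" unfolding V_def using b0 by simp
    show ?thesis
    proof (intro exI[of _ "2 ^ d * M * V powr (1 / p)"] allI impI)
      fix r :: real assume r: "r > 0"
      define B where "B = r powr (- Q) * 2 ^ d * M"
      have B0: "B > 0" unfolding B_def using r M0 by simp
      have Smeas: "S r \<in> sets lborel" unfolding S_def by (auto intro!: borel_closed closed_Times)
      have mS: "emeasure lborel (S r) = ennreal (V * r powr Q)"
        unfolding S_def V_def Q_def d_def using emeasure_S[OF r b0] by simp
      define I where "I = (\<integral>\<^sup>+ x. ennreal (\<bar>Kr \<beta> \<psi> r x\<bar> powr p) \<partial>lborel)"
      have "I \<le> (\<integral>\<^sup>+ x. ennreal (B powr p) * indicator (S r) x \<partial>lborel)"
        unfolding I_def
      proof (rule nn_integral_mono)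
        fix x
        show "ennreal (\<bar>Kr \<beta> \<psi> r x\<bar> powr p) \<le> ennreal (B powr p) * indicator (S r) x"
        proof (cases "x \<in> S r")
          case True
          then have "\<bar>Kr \<beta> \<psi> r x\<bar> \<le> B" using bound[OF r, of x] unfolding B_def by simp
          then have "\<bar>Kr \<beta> \<psi> r x\<bar> powr p \<le> B powr p" using p1 by (intro powr_mono2) auto
          then show ?thesis using True by (simp add: ennreal_leI)
        next
          case False
          then have "\<bar>Kr \<beta> \<psi> r x\<bar> \<le> 0" using bound[OF r, of x] by simp
          then show ?thesis using False by simp
        qed
      qed
      also have "\<dots> = ennreal (B powr p) * emeasure lborel (S r)"
        by (rule nn_integral_cmult_indicator[OF Smeas])
      also have "\<dots> = ennreal (B powr p * (V * r powr Q))"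
        unfolding mS using V0 r by (simp add: ennreal_mult)
      finally have I: "I \<le> ennreal (B powr p * (V * r powr Q))" .
      then have Itop: "I \<noteq> top" by (rule neq_top_trans[rotated]) simp
      have "enn2real I \<le> B powr p * (V * r powr Q)"
        using I V0 r by (intro enn2real_leI) auto
      then have "enn2real I powr (1 / p) \<le> (B powr p * (V * r powr Q)) powr (1 / p)"
        using p1 by (intro powr_mono2) auto
      also have "\<dots> = (B powr p) powr (1 / p) * (V powr (1 / p) * (r powr Q) powr (1 / p))"
        using B0 V0 r by (simp add: powr_mult)
      also have "\<dots> = B * (V powr (1 / p) * r powr (Q / p))"
        using B0 p1 by (simp add: powr_powr)
      also have "\<dots> = 2 ^ d * M * V powr (1 / p) * (r powr (- Q) * r powr (Q / p))"
        unfolding B_def by (simp only: mult_ac)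
      also have "r powr (- Q) * r powr (Q / p) = r powr (Q * (1 / p - 1))"
      proof -
        have "Q * (1 / p - 1) = - Q + Q / p" by (simp add: algebra_simps)
        moreover have "r powr (- Q) * r powr (Q / p) = r powr (- Q + Q / p)" by (rule powr_add[symmetric])
        ultimately show ?thesis by simp
      qed
      finally have fin: "enn2real I powr (1 / p) \<le> 2 ^ d * M * V powr (1 / p) * r powr (Q * (1 / p - 1))" .
      show "Lnorm \<theta> (Kr \<beta> \<psi> r) \<le> ereal (2 ^ d * M * V powr (1 / p) * r powr (Qexp \<beta> CARD('d) * (inv_exp \<theta> - 1)))"
        unfolding Lnorm_def inv_exp_def using p Itop fin unfolding I_def Q_def by (simp add: Let_def)
    qed
  qed
qed

end
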